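(* Let $n \ge 2$ and let $\vdash$ be derivability in any proof system $\mathcal{S}$ over located sequents (for truth-values $v_1,\dots,v_n$) whose object language contains the unary operators $N_1,\dots,N_n$ and which contains the structural rules listed in the context (initial sequents, shifting, coordination, weakening, cut), possibly together with further rules. Suppose the empty located sequent ${} : {}$ is not derivable in $\mathcal{S}$. If $v_j$ and $v_k$ ($1\le j,k\le n$) are both falsities (in the sense defined in the context), then $j=k$. Equivalently: if there are two falsities $v_j,v_k$ with $j\ne k$, then the empty sequent ${}:{}$ is derivable in $\mathcal{S}$.
   Context: Fix $n \ge 2$ and truth-values $\mathcal{V}=\{v_1,\dots,v_n\}$. A located formula is a pair $(\varphi,k)$ with $\varphi$ an object-language formula and $k\in\{1,\dots,n\}$ (intended meaning: $\varphi$ has value $v_k$). A located sequent is $\Gamma : \Delta$ with $\Gamma,\Delta$ finite (possibly empty) sets of located formulas; "$\Gamma:\Delta,(\varphi,i)$" denotes $\Gamma : \Delta\cup\{(\varphi,i)\}$, and "$\Gamma:\Delta,\{(\varphi,m)\mid m\neq i\}$" denotes $\Gamma:\Delta\cup\{(\varphi,m)\mid 1\le m\le n,\ m\ne i\}$. The proof system contains at least the following rules, for all finite $\Gamma,\Delta,\Gamma',\Delta'$, formulas $\varphi$ and indices: (initial) $\Gamma,(\varphi,i) : \Delta,(\varphi,i)$ is derivable for every $1\le i\le n$; (shift right $\overrightarrow{s}_i$) from $\Gamma,(\varphi,i):\Delta$ infer $\Gamma:\Delta,\{(\varphi,m)\mid m\ne i\}$; (shift left $\overleftarrow{s}_{i,j}$,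 $j\ne i$) from $\Gamma:\Delta,(\varphi,i)$ infer $\Gamma,(\varphi,j):\Delta$; (coordination $c_{i,j}$, $i\ne j$) from $\Gamma:\Delta,(\varphi,i)$ and $\Gamma:\Delta,(\varphi,j)$ infer $\Gamma:\Delta$; (weakening) from $\Gamma:\Delta$ infer $\Gamma\cup\Gamma':\Delta\cup\Delta'$; (cut) from $\Gamma:\Delta,(\varphi,i)$ and $\Gamma,(\varphi,i):\Delta$ infer $\Gamma:\Delta$. Definition (falsity): $v_j$ is a falsity iff for every $1\le i\le n$, every formula $\varphi$ and all finite $\Gamma,\Delta$: the sequent $\Gamma:\Delta,(N_i\varphi,j)$ is derivable iff the sequent $\Gamma:\Delta,(\varphi,i)$ is derivable. *)

theory Defs
  imports Main
begin

text \<open>Located formulas are pairs (phi, k) of an object formula of type 'f and an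
index k in {1..n}. A located sequent Gamma : Delta is a pair of finite sets of
located formulas. Derivability in the proof system S is an abstract predicate
D :: located set => located set => bool (D Gamma Delta means Gamma : Delta is derivable).\<close>

type_synonym 'f located = "'f \<times> nat"

definition located_set :: "nat \<Rightarrow> 'f located set \<Rightarrow> bool" where
  "located_set n A \<longleftrightarrow> finite A \<and> (\<forall>p\<in>A. 1 \<le> snd p \<and> snd p \<le> n)"

definition structural :: "nat \<Rightarrow> ('f located set \<Rightarrow> 'f located set \<Rightarrow> bool) \<Rightarrow> bool" where
  "structural n D \<longleftrightarrow>
     (\<forall>\<Gamma> \<Delta> \<phi> i. located_set n \<Gamma> \<longrightarrow> located_set n \<Delta> \<longrightarrow> 1 \<le> i \<longrightarrow> i \<le> n \<longrightarrow>
        D (insert (\<phi>, i) \<Gamma>) (insert (\<phi>, i) \<Delta>))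
   \<and> (\<forall>\<Gamma> \<Delta> \<phi> i. located_set n \<Gamma> \<longrightarrow> located_set n \<Delta> \<longrightarrow> 1 \<le> i \<longrightarrow> i \<le> n \<longrightarrow>
        D (insert (\<phi>, i) \<Gamma>) \<Delta> \<longrightarrow>
        D \<Gamma> (\<Delta> \<union> {(\<phi>, m) | m. 1 \<le> m \<and> m \<le> n \<and> m \<noteq> i}))
   \<and> (\<forall>\<Gamma> \<Delta> \<phi> i j. located_set n \<Gamma> \<longrightarrow> located_set n \<Delta> \<longrightarrow> 1 \<le> i \<longrightarrow> i \<le> n \<longrightarrow>
        1 \<le> j \<longrightarrow> j \<le> n \<longrightarrow> j \<noteq> i \<longrightarrow>
        D \<Gamma> (insert (\<phi>, i) \<Delta>) \<longrightarrow> D (insert (\<phi>, j) \<Gamma>) \<Delta>)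
   \<and> (\<forall>\<Gamma> \<Delta> \<phi> i j. located_set n \<Gamma> \<longrightarrow> located_set n \<Delta> \<longrightarrow> 1 \<le> i \<longrightarrow> i \<le> n \<longrightarrow>
        1 \<le> j \<longrightarrow> j \<le> n \<longrightarrow> i \<noteq> j \<longrightarrow>
        D \<Gamma> (insert (\<phi>, i) \<Delta>) \<longrightarrow> D \<Gamma> (insert (\<phi>, j) \<Delta>) \<longrightarrow> D \<Gamma> \<Delta>)
   \<and> (\<forall>\<Gamma> \<Delta> \<Gamma>' \<Delta>'. located_set n \<Gamma> \<longrightarrow> located_set n \<Delta> \<longrightarrow>
        located_set n \<Gamma>' \<longrightarrow> located_set n \<Delta>' \<longrightarrow>
        D \<Gamma> \<Delta> \<longrightarrow> D (\<Gamma> \<union> \<Gamma>') (\<Delta> \<union> \<Delta>'))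
   \<and> (\<forall>\<Gamma> \<Delta> \<phi> i. located_set n \<Gamma> \<longrightarrow> located_set n \<Delta> \<longrightarrow> 1 \<le> i \<longrightarrow> i \<le> n \<longrightarrow>
        D \<Gamma> (insert (\<phi>, i) \<Delta>) \<longrightarrow> D (insert (\<phi>, i) \<Gamma>) \<Delta> \<longrightarrow> D \<Gamma> \<Delta>)"

definition falsity :: "nat \<Rightarrow> (nat \<Rightarrow> 'f \<Rightarrow> 'f) \<Rightarrow> ('f located set \<Rightarrow> 'f located set \<Rightarrow> bool)
    \<Rightarrow> nat \<Rightarrow> bool" where
  "falsity n N D j \<longleftrightarrow>
     (\<forall>i \<phi> \<Gamma> \<Delta>. 1 \<le> i \<longrightarrow> i \<le> n \<longrightarrow> located_set n \<Gamma> \<longrightarrow> located_set n \<Delta> \<longrightarrow>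
        (D \<Gamma> (insert (N i \<phi>, j) \<Delta>) \<longleftrightarrow> D \<Gamma> (insert (\<phi>, i) \<Delta>)))"

end

theory Submission
  imports Defs
begin

lemma removal:
  assumes S: "structural n D" and j: "1 \<le> j" "j \<le> n" and k: "1 \<le> k" "k \<le> n" "j \<noteq> k"
    and fj: "falsity n N D j" and fk: "falsity n N D k"
  shows "finite \<Delta> \<Longrightarrow> located_set n \<Delta> \<Longrightarrow> D {} \<Delta> \<Longrightarrow> D {} {}"
proof (induction \<Delta> rule: finite_induct)
  case empty then show ?case by simp
next
  case (insert x F)
  obtain \<psi> i where x: "x = (\<psi>, i)" by fastforce
  have lF: "located_set n F" and i: "1 \<le> i" "i \<le> n"
    using insert.prems(1) x by (auto simp: located_set_def)
  have l0: "located_set n ({}::'a located set)" by (simp add: located_set_def)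
  have a: "D {} (insert (N i \<psi>, j) F)"
    using fj i lF l0 insert.prems(2) x unfolding falsity_def by blast
  have b: "D {} (insert (N i \<psi>, k) F)"
    using fk i lF l0 insert.prems(2) x unfolding falsity_def by blast
  have co: "\<forall>\<Gamma> \<Delta> \<phi> i j. located_set n \<Gamma> \<longrightarrow> located_set n \<Delta> \<longrightarrow> 1 \<le> i \<longrightarrow> i \<le> n \<longrightarrow>
        1 \<le> j \<longrightarrow> j \<le> n \<longrightarrow> i \<noteq> j \<longrightarrow>
        D \<Gamma> (insert (\<phi>, i) \<Delta>) \<longrightarrow> D \<Gamma> (insert (\<phi>, j) \<Delta>) \<longrightarrow> D \<Gamma> \<Delta>"
    using S unfolding structural_def by (elim conjE) assumption
  have c: "D {} F"
    using co[rule_format, OF l0 lF j k a b] .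
  show ?case using insert.IH lF c by blast
qed

theorem mainTheorem2:
  fixes n :: nat and N :: "nat \<Rightarrow> 'f \<Rightarrow> 'f"
    and D :: "'f located set \<Rightarrow> 'f located set \<Rightarrow> bool"
  assumes "n \<ge> 2"
    and "structural n D"
    and "\<not> D {} {}"
    and "1 \<le> j" "j \<le> n" "1 \<le> k" "k \<le> n"
    and "falsity n N D j" and "falsity n N D k"
  shows "j = k"
proof (rule ccontr)
  assume jk: "j \<noteq> k"
  fix \<phi> :: 'f
  have l0: "located_set n ({}::'f located set)" by (simp add: located_set_def)
  have n1: "1 \<le> (1::nat)" "1 \<le> n" using assms(1) by auto
  have init: "D (insert (\<phi>, 1) {}) (insert (\<phi>, 1) {})"
  proof -
    have "\<forall>\<Gamma> \<Delta> \<phi> i. located_set n \<Gamma> \<longrightarrow> located_set n \<Delta> \<longrightarrow> 1 \<le> i \<longrightarrow> i \<le> n \<longrightarrow>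
        D (insert (\<phi>, i) \<Gamma>) (insert (\<phi>, i) \<Delta>)" using assms(2) unfolding structural_def by (elim conjE) assumption
    from this[rule_format, OF l0 l0 n1] show ?thesis .
  qed
  define A where "A = {(\<phi>, m) | m. 1 \<le> m \<and> m \<le> n \<and> m \<noteq> (1::nat)}"
  have ls: "located_set n (insert (\<phi>, 1::nat) {})" using n1 by (simp add: located_set_def)
  have shr: "\<forall>\<Gamma> \<Delta> \<phi> i. located_set n \<Gamma> \<longrightarrow> located_set n \<Delta> \<longrightarrow> 1 \<le> i \<longrightarrow> i \<le> n \<longrightarrow>
        D (insert (\<phi>, i) \<Gamma>) \<Delta> \<longrightarrow>
        D \<Gamma> (\<Delta> \<union> {(\<phi>, m) | m. 1 \<le> m \<and> m \<le> n \<and> m \<noteq> i})"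
    using assms(2) unfolding structural_def by (elim conjE) assumption
  have d: "D {} (insert (\<phi>, 1) {} \<union> A)"
    unfolding A_def using shr[rule_format, OF l0 ls n1 init] .
  have fA: "A \<subseteq> (\<lambda>m. (\<phi>, m)) ` {1..n}" unfolding A_def by auto
  have fin: "finite (insert (\<phi>, 1) {} \<union> A)" using fA finite_subset by blast
  have loc: "located_set n (insert (\<phi>, 1) {} \<union> A)"
    using fin n1 unfolding located_set_def A_def by auto
  have "D {} {}"
    using removal[OF assms(2) assms(4,5) assms(6,7) jk assms(8,9) fin loc d] .
  with assms(3) show False by simp
qed

end
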